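(* Let $\pi$ be a permutation of $V=\{1,\dots,n\}$ and $s\in\mathbb{N}$. Let $T$ be a uniformly random transposition on $V$. Then the probability that some cycle of $\pi$ is split in $T\circ\pi$ into two cycles at least one of which has length at most $s$ is at most $2s/(n-1)$.
   Context: A transposition $T=(x,y)$ is uniformly chosen among all transpositions of $V$. If $x$ and $y$ lie in the same cycle of $\pi$, then that cycle is split in $T\circ\pi$ into two cycles; otherwise two cycles are joined. *)

theory Defs
  imports "HOL-Probability.Probability" "HOL-Combinatorics.Combinatorics"
begin

definition transpositions :: "'a set \<Rightarrow> ('a \<Rightarrow> 'a) set" where
  "transpositions V = {Transposition.transpose x y | x y. x \<in> V \<and> y \<in> V \<and> x \<noteq> y}"

definition small_split :: "('a \<Rightarrow> 'a) \<Rightarrow> nat \<Rightarrow> ('a \<Rightarrow> 'a) \<Rightarrow> bool" where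
  "small_split \<pi> s T \<longleftrightarrow>
     (\<exists>x y. x \<noteq> y \<and> T = Transposition.transpose x y \<and> y \<in> orbit \<pi> x
        \<and> y \<notin> orbit (T \<circ> \<pi>) x
        \<and> (card (orbit (T \<circ> \<pi>) x) \<le> s \<or> card (orbit (T \<circ> \<pi>) y) \<le> s))"

end

theory Submission
  imports Defs
begin

lemma key_split:
  fixes \<pi> :: "'a \<Rightarrow> 'a"
  assumes xy: "x \<noteq> y" and yin: "y \<in> orbit \<pi> x"
    and nin: "y \<notin> orbit (Transposition.transpose x y \<circ> \<pi>) x"
    and fin: "finite (orbit (Transposition.transpose x y \<circ> \<pi>) x)"
  shows "\<exists>k. 0 < k \<and> k \<le> card (orbit (Transposition.transpose x y \<circ> \<pi>) x) \<and> (\<pi> ^^ k) x = y"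
proof -
  define \<sigma> where "\<sigma> = Transposition.transpose x y \<circ> \<pi>"
  define P where "P = (\<lambda>k. 0 < k \<and> (\<pi> ^^ k) x = y)"
  have ex: "\<exists>k. P k" using yin unfolding P_def orbit_altdef by auto
  define k where "k = (LEAST k. P k)"
  have Pk: "P k" unfolding k_def using ex by (metis LeastI)
  have kmin: "\<And>m. m < k \<Longrightarrow> \<not> P m" unfolding k_def using not_less_Least by blast
  have k0: "0 < k" and ky: "(\<pi> ^^ k) x = y" using Pk P_def by auto
  have D: "(\<pi> ^^ i) x \<noteq> (\<pi> ^^ j) x" if "i < j" "j < k" for i j
  proof
    assume eq: "(\<pi> ^^ i) x = (\<pi> ^^ j) x"
    have "(\<pi> ^^ (k - j + i)) x = (\<pi> ^^ (k - j)) ((\<pi> ^^ i) x)"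
      by (simp add: funpow_add)
    also have "\<dots> = (\<pi> ^^ (k - j)) ((\<pi> ^^ j) x)" using eq by simp
    also have "\<dots> = (\<pi> ^^ (k - j + j)) x" by (simp add: funpow_add)
    also have "\<dots> = y" using that ky by simp
    finally have "P (k - j + i)" unfolding P_def using that by simp
    moreover have "k - j + i < k" using that by simp
    ultimately show False using kmin by blast
  qed
  have S: "(\<sigma> ^^ j) x = (\<pi> ^^ j) x" if "j < k" for j
    using that
  proof (induction j)
    case 0 then show ?case by simp
  next
    case (Suc j)
    have ne1: "(\<pi> ^^ Suc j) x \<noteq> y" using kmin[of "Suc j"] Suc.prems P_def by auto
    have ne2: "(\<pi> ^^ Suc j) x \<noteq> x" using D[of 0 "Suc j"] Suc.prems by simp
    have "(\<sigma> ^^ Suc j) x = \<sigma> ((\<pi> ^^ j) x)" using Suc by simp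
    also have "\<dots> = Transposition.transpose x y ((\<pi> ^^ Suc j) x)" by (simp add: \<sigma>_def)
    also have "\<dots> = (\<pi> ^^ Suc j) x" using ne1 ne2 by simp
    finally show ?case .
  qed
  have Sk: "(\<sigma> ^^ k) x = x"
  proof -
    obtain j where j: "k = Suc j" using k0 gr0_implies_Suc by blast
    have "(\<sigma> ^^ k) x = \<sigma> ((\<pi> ^^ j) x)" using S[of j] j by simp
    also have "\<dots> = Transposition.transpose x y ((\<pi> ^^ k) x)" by (simp add: \<sigma>_def j)
    also have "\<dots> = x" using ky by simp
    finally show ?thesis .
  qed
  have inj: "inj_on (\<lambda>j. (\<sigma> ^^ j) x) {1..k}"
  proof (rule inj_onI)
    fix i j assume i: "i \<in> {1..k}" and j: "j \<in> {1..k}" and eq: "(\<sigma> ^^ i) x = (\<sigma> ^^ j) x"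
    show "i = j"
    proof (rule ccontr)
      assume "i \<noteq> j"
      then consider "i < j" | "j < i" by linarith
      then show False
      proof cases
        case 1
        show False
        proof (cases "j = k")
          case True
          then have "(\<pi> ^^ i) x = (\<pi> ^^ 0) x" using eq Sk S[of i] 1 by simp
          then show ?thesis using D[of 0 i] 1 i True by auto
        next
          case False
          then show ?thesis using eq S[of i] S[of j] D[of i j] 1 j by auto
        qed
      next
        case 2
        show False
        proof (cases "i = k")
          case True
          then have "(\<pi> ^^ j) x = (\<pi> ^^ 0) x" using eq Sk S[of j] 2 by simp
          then show ?thesis using D[of 0 j] 2 j True by auto
        next
          case False
          then show ?thesis using eq S[of i] S[of j] D[of j i] 2 i by auto
        qed
      qed
    qed
  qed
  have sub: "(\<lambda>j. (\<sigma> ^^ j) x) ` {1..k} \<subseteq> orbit \<sigma> x"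
    unfolding orbit_altdef by auto
  have "k = card ((\<lambda>j. (\<sigma> ^^ j) x) ` {1..k})" using card_image[OF inj] by simp
  also have "\<dots> \<le> card (orbit \<sigma> x)" using card_mono[OF fin[folded \<sigma>_def] sub] .
  finally show ?thesis using k0 ky unfolding \<sigma>_def by blast
qed

lemma sum_gauss_aux: "2 * (\<Sum>a=1..n. n - a) = n * (n - 1::nat)"
proof (induction n)
  case 0 then show ?case by simp
next
  case (Suc n)
  have "(\<Sum>a=1..Suc n. Suc n - a) = (\<Sum>a=1..n. Suc n - a)" by (simp add: sum.atLeast1_atMost_eq)
  also have "\<dots> = (\<Sum>a=1..n. (n - a) + 1)" by (intro sum.cong) auto
  also have "\<dots> = (\<Sum>a=1..n. n - a) + n" unfolding sum.distrib by simp
  finally have "2 * (\<Sum>a=1..Suc n. Suc n - a) = n * (n - 1) + 2 * n" using Suc by simp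
  then show ?case by (cases n) (auto simp: algebra_simps)
qed

lemma transpositions_sub:
  "transpositions V \<subseteq> (\<lambda>(a,b). Transposition.transpose a b) ` (V \<times> V)"
proof (rule subsetI)
  fix t assume "t \<in> transpositions V"
  then obtain x y where "t = Transposition.transpose x y" "x \<in> V" "y \<in> V"
    unfolding transpositions_def by blast
  then show "t \<in> (\<lambda>(a,b). Transposition.transpose a b) ` (V \<times> V)"
    by (intro image_eqI[where x="(x,y)"]) auto
qed

lemma finite_transpositions: "finite V \<Longrightarrow> finite (transpositions V)"
  by (rule finite_subset[OF transpositions_sub]) simp

lemma card_transpositions:
  "n * (n - 1) \<le> 2 * card (transpositions {1..n::nat})"
proof -
  define P where "P = Sigma {1..n} (\<lambda>a. {a<..n})"
  have cP: "card P = (\<Sum>a=1..n. n - a)" unfolding P_def by (simp add: card_SigmaI)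
  have inj: "inj_on (\<lambda>(a,b). Transposition.transpose a b) P"
  proof (rule inj_onI, clarify)
    fix a b c d assume ab: "(a,b) \<in> P" and cd: "(c,d) \<in> P"
      and eq: "Transposition.transpose a b = Transposition.transpose c d"
    have "Transposition.transpose c d a = b" using eq[symmetric] by (metis transpose_apply_first)
    then have "(a \<noteq> c \<and> a \<noteq> d \<and> b = a) \<or> (a = c \<and> b = d) \<or> (a = d \<and> b = c)"
      by (simp only: transpose_eq_iff)
    moreover have "a < b" "c < d" using ab cd unfolding P_def by auto
    ultimately show "a = c \<and> b = d" by auto
  qed
  have sub: "(\<lambda>(a,b). Transposition.transpose a b) ` P \<subseteq> transpositions {1..n}"
  proof (rule subsetI)
    fix t assume "t \<in> (\<lambda>(a,b). Transposition.transpose a b) ` P"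
    then obtain a b where "t = Transposition.transpose a b" "(a,b) \<in> P" by auto
    then show "t \<in> transpositions {1..n}" unfolding P_def transpositions_def
      by (intro CollectI exI[where x=a] exI[where x=b]) auto
  qed
  have fin: "finite (transpositions {1..n})"
    by (rule finite_transpositions) simp
  have "card P \<le> card (transpositions {1..n})"
    using card_mono[OF fin sub] card_image[OF inj] by simp
  then show ?thesis using sum_gauss_aux[of n] cP by simp
qed

lemma fix_funpow: "f x = x \<Longrightarrow> (f ^^ m) x = x"
  by (induction m) auto

theorem lemma2p1:
  fixes \<pi> :: "nat \<Rightarrow> nat" and n s :: nat
  assumes "\<pi> permutes {1..n}" and "n \<ge> 2"
  shows "measure_pmf.prob (pmf_of_set (transpositions {1..n})) {T. small_split \<pi> s T}
           \<le> 2 * real s / (real n - 1)"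
proof -
  define V where "V = {1..n}"
  have pV: "\<pi> permutes V" using assms(1) V_def by simp
  have permpi: "permutation \<pi>" using permutes_imp_permutation[OF _ pV] V_def by simp
  define F where "F = (\<lambda>(z,k). Transposition.transpose z ((\<pi> ^^ k) z)) ` (V \<times> {1..s})"
  have EF: "{T. small_split \<pi> s T} \<subseteq> F"
  proof
    fix T assume "T \<in> {T. small_split \<pi> s T}"
    then obtain x y where xy: "x \<noteq> y" and T: "T = Transposition.transpose x y"
      and yin: "y \<in> orbit \<pi> x" and nin: "y \<notin> orbit (T \<circ> \<pi>) x"
      and c: "card (orbit (T \<circ> \<pi>) x) \<le> s \<or> card (orbit (T \<circ> \<pi>) y) \<le> s"
      unfolding small_split_def by blast
    have xV: "x \<in> V"
    proof (rule ccontr)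
      assume "x \<notin> V"
      then have "\<pi> x = x" using pV by (simp add: permutes_not_in)
      then have "orbit \<pi> x = {x}" by (simp add: orbit_eq_singleton_iff)
      then show False using yin xy by simp
    qed
    have yV: "y \<in> V" using permutes_orbit_subset[OF pV xV] yin by auto
    have sV: "T \<circ> \<pi> permutes V" unfolding T
      by (rule permutes_compose[OF pV permutes_swap_id[OF xV yV]])
    have permsig: "permutation (T \<circ> \<pi>)" using permutes_imp_permutation[OF _ sV] V_def by simp
    have finx: "finite (orbit (T \<circ> \<pi>) x)"
      using permutes_orbit_subset[OF sV xV] V_def finite_subset by auto
    have finy: "finite (orbit (T \<circ> \<pi>) y)"
      using permutes_orbit_subset[OF sV yV] V_def finite_subset by auto
    from c show "T \<in> F"
    proof
      assume cx: "card (orbit (T \<circ> \<pi>) x) \<le> s"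
      obtain k where k: "0 < k" "k \<le> card (orbit (T \<circ> \<pi>) x)" "(\<pi> ^^ k) x = y"
        using key_split[OF xy yin nin[unfolded T] finx[unfolded T]] T by blast
      show "T \<in> F" unfolding F_def T
        using xV k cx by (intro image_eqI[where x="(x,k)"]) auto
    next
      assume cy: "card (orbit (T \<circ> \<pi>) y) \<le> s"
      have yx: "y \<noteq> x" using xy by simp
      have xin: "x \<in> orbit \<pi> y"
        using orbit_swap[OF permutation_self_in_orbit[OF permpi] yin] .
      have nin': "x \<notin> orbit (T \<circ> \<pi>) y"
      proof
        assume "x \<in> orbit (T \<circ> \<pi>) y"
        then have "y \<in> orbit (T \<circ> \<pi>) x"
          using orbit_swap[OF permutation_self_in_orbit[OF permsig]] by blast
        then show False using nin by simp
      qed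
      have T': "T = Transposition.transpose y x" using T by (simp add: transpose_commute)
      obtain k where k: "0 < k" "k \<le> card (orbit (T \<circ> \<pi>) y)" "(\<pi> ^^ k) y = x"
        using key_split[OF yx xin nin'[unfolded T'] finy[unfolded T']] T' by blast
      show "T \<in> F" unfolding F_def T'
        using yV k cy by (intro image_eqI[where x="(y,k)"]) auto
    qed
  qed
  have cF: "card F \<le> n * s"
  proof -
    have "card F \<le> card (V \<times> {1..s})" unfolding F_def by (rule card_image_le) (simp add: V_def)
    also have "\<dots> = n * s" by (simp add: V_def card_cartesian_product)
    finally show ?thesis .
  qed
  define Tr where "Tr = transpositions V"
  have finTr: "finite Tr"
    unfolding Tr_def V_def by (rule finite_transpositions) simp
  have neTr: "Tr \<noteq> {}"
  proof -
    have "Transposition.transpose 1 2 \<in> Tr" unfolding Tr_def transpositions_def V_def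
      using assms(2) by (intro CollectI exI[where x=1] exI[where x=2]) simp
    then show ?thesis by blast
  qed
  have cTr: "real n * (real n - 1) \<le> 2 * real (card Tr)"
  proof -
    have "n * (n - 1) \<le> 2 * card Tr" using card_transpositions[of n] Tr_def V_def by simp
    then have "real (n * (n - 1)) \<le> real (2 * card Tr)" by (simp only: of_nat_le_iff)
    then show ?thesis using assms(2) by (simp add: of_nat_diff)
  qed
  have cE: "card (Tr \<inter> {T. small_split \<pi> s T}) \<le> n * s"
  proof -
    have "finite F" unfolding F_def V_def by simp
    then have "card (Tr \<inter> {T. small_split \<pi> s T}) \<le> card F"
      using EF by (intro card_mono) auto
    then show ?thesis using cF by simp
  qed
  have h1: "measure_pmf.prob (pmf_of_set Tr) {T. small_split \<pi> s T}
        = real (card (Tr \<inter> {T. small_split \<pi> s T})) / real (card Tr)"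
    by (rule measure_pmf_of_set[OF neTr finTr])
  have pos0: "card Tr > 0" using neTr finTr by (simp only: card_gt_0_iff) blast
  have pos: "real (card Tr) > 0" using pos0 by (simp only: of_nat_0_less_iff)
  have n2: "real n \<ge> 2" using assms(2) by (metis of_nat_le_iff of_nat_numeral)
  have n1: "real n - 1 > 0" using n2 by linarith
  have cE': "real (card (Tr \<inter> {T. small_split \<pi> s T})) \<le> real n * real s"
    using cE by (simp only: of_nat_le_iff of_nat_mult[symmetric])
  have m: "real n * (real n - 1) * real s \<le> 2 * real (card Tr) * real s"
    by (rule mult_right_mono[OF cTr]) simp
  have m2: "real (card (Tr \<inter> {T. small_split \<pi> s T})) * (real n - 1) \<le> 2 * real s * real (card Tr)"
  proof -
    have "real (card (Tr \<inter> {T. small_split \<pi> s T})) * (real n - 1) \<le> real n * real s * (real n - 1)"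
      by (rule mult_right_mono[OF cE']) (use n1 in linarith)
    also have "\<dots> = real n * (real n - 1) * real s" by (simp only: ac_simps)
    also have "\<dots> \<le> 2 * real (card Tr) * real s" by (rule m)
    also have "\<dots> = 2 * real s * real (card Tr)" by (simp only: ac_simps)
    finally show ?thesis .
  qed
  have "real (card (Tr \<inter> {T. small_split \<pi> s T})) / real (card Tr) \<le> 2 * real s / (real n - 1)"
  proof -
    have "real (card (Tr \<inter> {T. small_split \<pi> s T})) \<le> 2 * real s * real (card Tr) / (real n - 1)"
      using m2 n1 by (simp only: pos_le_divide_eq)
    also have "\<dots> = 2 * real s / (real n - 1) * real (card Tr)" by simp
    finally show ?thesis using pos by (simp only: pos_divide_le_eq)
  qed
  then show ?thesis using h1 unfolding Tr_def V_def by simp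
qed

end
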